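(* Let $q(x\mid\theta)=\sum_{k=1}^K\omega_k(\theta)\,\mathcal{N}\big(x;\vartheta_k(\theta),\Omega_k(\theta)\big)$ be a Gaussian mixture density network on $\mathbb{R}^{d_\mathcal{X}}$, $\theta\in\Theta\subseteq\mathbb{R}^{d_\Theta}$, with mixture weights $\omega_k(\theta)\ge0$ summing to $1$, such that: (i) $\omega_k,\vartheta_k,\Omega_k$ are continuous in $\theta$; (ii) there exist $r>0$, $C\ge0$ with $\max_k\|\vartheta_k(\theta)\|\le C(1+\|\theta\|^r)$ for all $\theta$; (iii) there exist $0<\lambda_{\min}\le\lambda_{\max}<\infty$ such that every $\Omega_k(\theta)$ is symmetric with all eigenvalues in $[\lambda_{\min},\lambda_{\max}]$, for all $k$ and $\theta$. Then for every $0<\zeta\le2$ there exist constants $0<K_1,K_2<\infty$ and $k_1,k_2\ge0$ such that for all $x\in\mathbb{R}^{d_\mathcal{X}}$ and $\theta\in\Theta$, $$\|\nabla_x\log q(x\mid\theta)\|_2\le K_1(1+\|\theta\|^{k_1})(1+\|x\|_2^{2/\zeta}),\qquad \big|\mathrm{Tr}\,\nabla_x^2\log q(x\mid\theta)\big|\le K_2(1+\|\theta\|^{k_2})(1+\|x\|_2^{4/\zeta}).$$ *)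

theory Defs
  imports "HOL-Analysis.Analysis"
begin

definition is_eigenvalue :: "real^'n^'n \<Rightarrow> real \<Rightarrow> bool" where
  "is_eigenvalue A l \<longleftrightarrow> (\<exists>v. v \<noteq> 0 \<and> A *v v = l *s v)"

definition gaussian_pdf :: "real^'n \<Rightarrow> real^'n^'n \<Rightarrow> real^'n \<Rightarrow> real" where
  "gaussian_pdf mu S x =
     exp (- (1/2) * ((x - mu) \<bullet> (matrix_inv S *v (x - mu))))
     / sqrt ((2 * pi) ^ CARD('n) * det S)"

definition partial_deriv :: "(real^'n \<Rightarrow> real) \<Rightarrow> 'n \<Rightarrow> real^'n \<Rightarrow> real" where
  "partial_deriv f i x = deriv (\<lambda>t. f (x + t *\<^sub>R axis i 1)) 0"

definition grad :: "(real^'n \<Rightarrow> real) \<Rightarrow> real^'n \<Rightarrow> real^'n" where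
  "grad f x = (\<chi> i. partial_deriv f i x)"

definition laplacian :: "(real^'n \<Rightarrow> real) \<Rightarrow> real^'n \<Rightarrow> real" where
  "laplacian f x = (\<Sum>i\<in>UNIV. partial_deriv (\<lambda>y. partial_deriv f i y) i x)"

definition gmm_density ::
  "nat \<Rightarrow> (nat \<Rightarrow> real^'t \<Rightarrow> real) \<Rightarrow> (nat \<Rightarrow> real^'t \<Rightarrow> real^'n)
    \<Rightarrow> (nat \<Rightarrow> real^'t \<Rightarrow> real^'n^'n) \<Rightarrow> real^'t \<Rightarrow> real^'n \<Rightarrow> real" where
  "gmm_density K w m S \<theta> x = (\<Sum>k=1..K. w k \<theta> * gaussian_pdf (m k \<theta>) (S k \<theta>) x)"

end

theory Submission
  imports Defs
begin


lemma sym_inner: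
  fixes S :: "real^'n^'n"
  assumes "transpose S = S"
  shows "u \<bullet> (S *v v) = (S *v u) \<bullet> v"
proof -
  have "u \<bullet> (S *v v) = (u v* S) \<bullet> v" by (simp add: dot_lmul_matrix)
  also have "u v* S = transpose S *v u" by simp
  finally show ?thesis using assms by simp
qed

lemma quad_zero:
  fixes a b :: real
  assumes "a \<ge> 0" "\<And>t. 2*t*b + t^2*a \<ge> 0"
  shows "b = 0"
proof (rule ccontr)
  assume "b \<noteq> 0"
  define t where "t = -b/(a+1)"
  have a1: "a + 1 > 0" using assms(1) by linarith
  have ta: "t*(a+1) = -b" using a1 by (simp add: t_def)
  have "(a+1)^2 * (2*t*b + t^2*a) = 2*(t*(a+1))*b*(a+1) + (t*(a+1))^2*a"
    by (simp add: power2_eq_square algebra_simps)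
  also have "\<dots> = b^2 * (-a-2)" unfolding ta by (simp add: power2_eq_square algebra_simps)
  also have "\<dots> < 0" using \<open>b \<noteq> 0\<close> assms(1)
    by (intro mult_pos_neg) auto
  finally have "(a+1)^2 * (2*t*b + t^2*a) < 0" .
  then have "2*t*b + t^2*a < 0" using a1
    by (metis mult_nonneg_nonneg not_le zero_le_power2)
  then show False using assms(2)[of t] by linarith
qed

lemma psd_bound:
  fixes S :: "real^'n^'n"
  assumes symm: "transpose S = S"
    and eig: "\<And>l. is_eigenvalue S l \<Longrightarrow> lmin \<le> l"
  shows "lmin * (v \<bullet> v) \<le> v \<bullet> (S *v v)"
proof -
  let ?f = "\<lambda>v. v \<bullet> (S *v v)"
  have cont: "continuous_on (sphere 0 1) ?f"
    by (intro continuous_intros linear_continuous_on matrix_vector_mul_linear)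
  have ne: "sphere (0::real^'n) 1 \<noteq> {}"
  proof -
    have "(axis undefined 1 :: real^'n) \<in> sphere 0 1" by (simp add: norm_axis_1)
    then show ?thesis by blast
  qed
  obtain v0 where v0: "v0 \<in> sphere 0 1" and min: "\<And>v. v \<in> sphere 0 1 \<Longrightarrow> ?f v0 \<le> ?f v"
    using continuous_attains_inf[OF compact_sphere ne cont] by blast
  define \<mu> where "\<mu> = ?f v0"
  have nv0: "norm v0 = 1" using v0 by simp
  have hom: "\<mu> * (v \<bullet> v) \<le> ?f v" for v
  proof (cases "v = 0")
    case True then show ?thesis by simp
  next
    case False
    define u where "u = (1/norm v) *\<^sub>R v"
    have "u \<in> sphere 0 1" using False by (simp add: u_def)
    then have "\<mu> \<le> ?f u" using min \<mu>_def by blast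
    also have "?f u = ?f v / (norm v)^2"
      by (simp add: u_def matrix_vector_mult_scaleR power2_eq_square field_simps)
    finally show ?thesis using False
      by (simp add: pos_le_divide_eq power2_norm_eq_inner[symmetric])
  qed
  define w where "w = S *v v0 - \<mu> *\<^sub>R v0"
  have "w \<bullet> (S *v v0 - \<mu> *\<^sub>R v0) = 0"
  proof (rule quad_zero)
    show "0 \<le> ?f w - \<mu> * (w \<bullet> w)" using hom[of w] by simp
    fix t :: real
    have "0 \<le> ?f (v0 + t *\<^sub>R w) - \<mu> * ((v0 + t *\<^sub>R w) \<bullet> (v0 + t *\<^sub>R w))"
      using hom[of "v0 + t *\<^sub>R w"] by simp
    also have "\<dots> = (?f v0 - \<mu> * (v0 \<bullet> v0)) + 2*t*(w \<bullet> (S *v v0 - \<mu> *\<^sub>R v0)) + t^2 * (?f w - \<mu> * (w \<bullet> w))"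
      using sym_inner[OF symm, of v0 w]
      by (simp add: matrix_vector_right_distrib matrix_vector_mult_scaleR inner_add_left inner_add_right
          inner_diff_right algebra_simps power2_eq_square inner_commute)
    also have "?f v0 - \<mu> * (v0 \<bullet> v0) = 0"
      using nv0 by (simp add: \<mu>_def power2_norm_eq_inner[symmetric])
    finally show "0 \<le> 2*t*(w \<bullet> (S *v v0 - \<mu> *\<^sub>R v0)) + t^2 * (?f w - \<mu> * (w \<bullet> w))" by simp
  qed
  then have "w = 0" by (simp add: w_def)
  then have "is_eigenvalue S \<mu>"
    unfolding is_eigenvalue_def using nv0
    by (intro exI[of _ v0]) (auto simp: w_def scalar_mult_eq_scaleR)
  then have "lmin \<le> \<mu>" by (rule eig)
  then show ?thesis using hom[of v] by (meson dual_order.trans inner_ge_zero mult_right_mono)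
qed

lemma pd_invertible:
  fixes S :: "real^'n^'n"
  assumes "c > 0" "\<And>v. c * (v \<bullet> v) \<le> v \<bullet> (S *v v)"
  shows "invertible S"
proof -
  have "\<forall>x. S *v x = 0 \<longrightarrow> x = 0"
  proof (intro allI impI)
    fix x assume "S *v x = 0"
    then have "c * (x \<bullet> x) \<le> 0" using assms(2)[of x] by simp
    then have "x \<bullet> x \<le> 0" using assms(1) by (simp add: mult_le_0_iff)
    then show "x = 0" using inner_gt_zero_iff[of x] by linarith
  qed
  then show ?thesis
    using matrix_left_invertible_ker invertible_left_inverse by blast
qed

lemma pd_facts:
  fixes S :: "real^'n^'n"
  assumes symm: "transpose S = S"
    and lpos: "0 < lmin"
    and eig: "\<And>l. is_eigenvalue S l \<Longrightarrow> lmin \<le> l"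
  shows "invertible S" "det S > 0" "transpose (matrix_inv S) = matrix_inv S"
    "S ** matrix_inv S = mat 1" "matrix_inv S ** S = mat 1"
    "norm (matrix_inv S *v u) \<le> norm u / lmin"
proof -
  have pb: "lmin * (v \<bullet> v) \<le> v \<bullet> (S *v v)" for v
    using psd_bound[OF symm eig] by blast
  show inv: "invertible S" using pd_invertible[OF lpos pb] .
  then show SA: "S ** matrix_inv S = mat 1" and AS: "matrix_inv S ** S = mat 1"
    unfolding invertible_def matrix_inv_def by (metis (mono_tags, lifting) someI_ex)+
  define M where "M t = (\<chi> i j. (1-t) * (if i = j then 1 else 0) + t * S$i$j)" for t :: real
  have detM: "(\<lambda>t. det (M t)) = (\<lambda>t. \<Sum>p\<in>{p. p permutes (UNIV::'n set)}. of_int (sign p) *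
      (\<Prod>i\<in>UNIV. (1-t) * (if i = p i then 1 else 0) + t * S$i$p i))"
    by (simp add: det_def M_def)
  have cont: "continuous_on {0..1} (\<lambda>t. det (M t))"
    unfolding detM by (intro continuous_intros)
  have M0: "M 0 = mat 1" by (simp add: M_def mat_def vec_eq_iff)
  have M1: "M 1 = S" by (simp add: M_def vec_eq_iff)
  have Mv: "M t *v v = (1-t) *\<^sub>R v + t *\<^sub>R (S *v v)" for t v
  proof -
    have "(M t *v v)$i = ((1-t) *\<^sub>R v + t *\<^sub>R (S *v v))$i" for i
    proof -
      have e1: "\<And>j. ((1-t) * (if i = j then 1 else 0) + t * S$i$j) * v$j
          = (1-t) * (if i = j then v$j else 0) + t * (S$i$j * v$j)" by (simp add: algebra_simps)
      have e2: "(\<Sum>j\<in>UNIV. (1-t) * (if i = j then v$j else 0)) = (\<Sum>j\<in>UNIV. if i = j then (1-t) * v$j else 0)"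
        by (rule sum.cong) auto
      have "(M t *v v)$i = (\<Sum>j\<in>UNIV. ((1-t) * (if i = j then 1 else 0) + t * S$i$j) * v$j)"
        by (simp add: M_def matrix_vector_mult_def)
      also have "\<dots> = (\<Sum>j\<in>UNIV. (1-t) * (if i = j then v$j else 0)) + t * (\<Sum>j\<in>UNIV. S$i$j * v$j)"
        by (simp only: e1 sum.distrib sum_distrib_left)
      also have "\<dots> = (1-t) * v$i + t * (\<Sum>j\<in>UNIV. S$i$j * v$j)"
      proof -
        have e3: "(\<Sum>j\<in>UNIV. if i = j then (1-t) * v$j else 0) = (1-t) * v$i"
          by (simp only: sum.delta' finite UNIV_I if_True)
        show ?thesis unfolding e2 e3 ..
      qed
      also have "\<dots> = ((1-t) *\<^sub>R v + t *\<^sub>R (S *v v))$i"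
        by (simp add: matrix_vector_mult_def)
      finally show ?thesis .
    qed
    then show ?thesis by (simp add: vec_eq_iff)
  qed
  have nz: "det (M t) \<noteq> 0" if "t \<in> {0..1}" for t
  proof -
    have c: "0 < (1-t) + t*lmin"
    proof (cases "t = 0")
      case True then show ?thesis by simp
    next
      case False then have "t > 0" using that by auto
      then have "t * lmin > 0" using lpos by simp
      moreover have "1 - t \<ge> 0" using that by simp
      ultimately show ?thesis by linarith
    qed
    have "((1-t) + t*lmin) * (v \<bullet> v) \<le> v \<bullet> (M t *v v)" for v
    proof -
      have "t * (lmin * (v \<bullet> v)) \<le> t * (v \<bullet> (S *v v))"
        using pb[of v] that by (intro mult_left_mono) auto
      moreover have "v \<bullet> (M t *v v) = (1-t) * (v \<bullet> v) + t * (v \<bullet> (S *v v))"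
        unfolding Mv by (simp only: inner_add_right inner_scaleR_right)
      ultimately show ?thesis by (simp only: distrib_right mult.assoc)
    qed
    then have "invertible (M t)" using pd_invertible[OF c] by blast
    then show ?thesis using invertible_det_nz by blast
  qed
  show "det S > 0"
  proof (rule ccontr)
    assume "\<not> det S > 0"
    then have "det (M 1) \<le> 0" unfolding M1 by linarith
    moreover have "0 \<le> det (M 0)" unfolding M0 by simp
    ultimately have "\<exists>t. 0 \<le> t \<and> t \<le> 1 \<and> det (M t) = 0"
      using IVT2'[of "\<lambda>t. det (M t)" 1 0 0] cont by simp
    then obtain t where "0 \<le> t" "t \<le> 1" "det (M t) = 0" by blast
    then show False using nz[of t] by simp
  qed
  show "transpose (matrix_inv S) = matrix_inv S"
  proof -
    have "transpose (matrix_inv S) ** S = transpose (S ** matrix_inv S)"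
      by (simp only: matrix_transpose_mul symm)
    also have "\<dots> = mat 1" by (simp only: SA transpose_mat)
    finally have TS: "transpose (matrix_inv S) ** S = mat 1" .
    have "transpose (matrix_inv S) = transpose (matrix_inv S) ** (S ** matrix_inv S)"
      by (simp only: SA matrix_mul_rid)
    also have "\<dots> = (transpose (matrix_inv S) ** S) ** matrix_inv S"
      by (simp only: matrix_mul_assoc)
    also have "\<dots> = matrix_inv S" by (simp only: TS matrix_mul_lid)
    finally show ?thesis .
  qed
  show "norm (matrix_inv S *v u) \<le> norm u / lmin"
  proof -
    define v where "v = matrix_inv S *v u"
    have Sv: "S *v v = u" by (simp add: v_def matrix_vector_mul_assoc SA)
    have "lmin * (norm v)^2 \<le> v \<bullet> u" using pb[of v] Sv by (simp add: power2_norm_eq_inner)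
    also have "\<dots> \<le> norm v * norm u" by (rule norm_cauchy_schwarz)
    finally have "lmin * (norm v)^2 \<le> norm v * norm u" .
    then have "lmin * norm v \<le> norm u"
      by (cases "norm v = 0") (auto simp: power2_eq_square)
    then show ?thesis using lpos by (simp add: v_def pos_le_divide_eq mult.commute)
  qed
qed



lemma E_deriv:
  "((\<lambda>t. exp (a + t*b - t^2/2*h)) has_real_derivative exp (a + t*b - t^2/2*h) * (b - t*h)) (at t)"
  by (auto intro!: derivative_eq_intros simp: algebra_simps)

lemma EB_deriv:
  "((\<lambda>t. exp (a + t*b - t^2/2*h) * (b - t*h)) has_real_derivative
     exp (a + t*b - t^2/2*h) * ((b - t*h)^2 - h)) (at t)"
  by (auto intro!: derivative_eq_intros simp: algebra_simps power2_eq_square)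

lemma Q_deriv:
  fixes c a b h :: "nat \<Rightarrow> real"
  shows "((\<lambda>t. \<Sum>k\<in>I. c k * exp (a k + t*b k - t^2/2*h k)) has_real_derivative
     (\<Sum>k\<in>I. c k * (exp (a k + t*b k - t^2/2*h k) * (b k - t*h k)))) (at t)"
  by (intro DERIV_sum DERIV_cmult E_deriv)

lemma N_deriv:
  fixes c a b h :: "nat \<Rightarrow> real"
  shows "((\<lambda>t. \<Sum>k\<in>I. c k * (exp (a k + t*b k - t^2/2*h k) * (b k - t*h k))) has_real_derivative
     (\<Sum>k\<in>I. c k * (exp (a k + t*b k - t^2/2*h k) * ((b k - t*h k)^2 - h k)))) (at t)"
  by (intro DERIV_sum DERIV_cmult EB_deriv)

lemma D1:
  fixes c a b h :: "nat \<Rightarrow> real"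
  assumes "(\<Sum>k\<in>I. c k * exp (a k)) > 0"
  shows "deriv (\<lambda>t. ln (\<Sum>k\<in>I. c k * exp (a k + t*b k - t^2/2*h k))) 0
     = (\<Sum>k\<in>I. c k * (exp (a k) * b k)) / (\<Sum>k\<in>I. c k * exp (a k))"
proof (rule DERIV_imp_deriv)
  have "((\<lambda>t. ln (\<Sum>k\<in>I. c k * exp (a k + t*b k - t^2/2*h k))) has_real_derivative
     (1 / (\<Sum>k\<in>I. c k * exp (a k + 0*b k - 0^2/2*h k))) * (\<Sum>k\<in>I. c k * (exp (a k + 0*b k - 0^2/2*h k) * (b k - 0*h k)))) (at 0)"
    by (rule DERIV_chain2[OF DERIV_ln_divide Q_deriv]) (use assms in simp)
  then show "((\<lambda>t. ln (\<Sum>k\<in>I. c k * exp (a k + t*b k - t^2/2*h k))) has_real_derivative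
     (\<Sum>k\<in>I. c k * (exp (a k) * b k)) / (\<Sum>k\<in>I. c k * exp (a k))) (at 0)"
    by simp
qed

lemma D2:
  fixes c a b h :: "nat \<Rightarrow> real"
  assumes "(\<Sum>k\<in>I. c k * exp (a k)) > 0"
  shows "deriv (\<lambda>t. (\<Sum>k\<in>I. c k * (exp (a k + t*b k - t^2/2*h k) * (b k - t*h k)))
                     / (\<Sum>k\<in>I. c k * exp (a k + t*b k - t^2/2*h k))) 0
     = (\<Sum>k\<in>I. c k * (exp (a k) * ((b k)^2 - h k))) / (\<Sum>k\<in>I. c k * exp (a k))
       - ((\<Sum>k\<in>I. c k * (exp (a k) * b k)) / (\<Sum>k\<in>I. c k * exp (a k)))^2"
proof (rule DERIV_imp_deriv)
  let ?Q = "\<Sum>k\<in>I. c k * exp (a k)"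
  let ?N = "\<Sum>k\<in>I. c k * (exp (a k) * b k)"
  let ?N' = "\<Sum>k\<in>I. c k * (exp (a k) * ((b k)^2 - h k))"
  have "((\<lambda>t. (\<Sum>k\<in>I. c k * (exp (a k + t*b k - t^2/2*h k) * (b k - t*h k)))
                     / (\<Sum>k\<in>I. c k * exp (a k + t*b k - t^2/2*h k))) has_real_derivative
        (?N' * ?Q - ?N * ?N) / (?Q * ?Q)) (at 0)"
    using DERIV_divide[OF N_deriv[where I=I and c=c and a=a and b=b and h=h and t=0] Q_deriv[where I=I and c=c and a=a and b=b and h=h and t=0]] assms by simp
  moreover have "(?N' * ?Q - ?N * ?N) / (?Q * ?Q) = ?N' / ?Q - (?N / ?Q)^2"
    using assms by (simp add: field_simps power2_eq_square)
  ultimately show "((\<lambda>t. (\<Sum>k\<in>I. c k * (exp (a k + t*b k - t^2/2*h k) * (b k - t*h k)))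
                     / (\<Sum>k\<in>I. c k * exp (a k + t*b k - t^2/2*h k))) has_real_derivative
        ?N' / ?Q - (?N / ?Q)^2) (at 0)" by simp
qed



lemma expand:
  fixes A :: "real^'n^'n"
  assumes "transpose A = A"
  shows "-(1/2) * ((y + t *\<^sub>R e - mu) \<bullet> (A *v (y + t *\<^sub>R e - mu)))
     = -(1/2) * ((y - mu) \<bullet> (A *v (y - mu))) + t * (e \<bullet> (A *v (mu - y))) - t^2/2 * (e \<bullet> (A *v e))"
    and "e \<bullet> (A *v (mu - (y + t *\<^sub>R e))) = e \<bullet> (A *v (mu - y)) - t * (e \<bullet> (A *v e))"
proof -
  have s: "(y - mu) \<bullet> (A *v e) = e \<bullet> (A *v (y - mu))"
    using sym_inner[OF assms, of "y - mu" e] by (simp add: inner_commute)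
  have "y + t *\<^sub>R e - mu = (y - mu) + t *\<^sub>R e" by simp
  then have "(y + t *\<^sub>R e - mu) \<bullet> (A *v (y + t *\<^sub>R e - mu))
      = (y - mu) \<bullet> (A *v (y - mu)) + t * ((y - mu) \<bullet> (A *v e)) + t * (e \<bullet> (A *v (y - mu)))
        + t^2 * (e \<bullet> (A *v e))"
    by (simp add: matrix_vector_right_distrib matrix_vector_mult_scaleR inner_add_left inner_add_right
          power2_eq_square algebra_simps)
  moreover have "e \<bullet> (A *v (mu - y)) = - (e \<bullet> (A *v (y - mu)))"
    by (simp add: matrix_vector_mult_diff_distrib inner_diff_right)
  ultimately show "-(1/2) * ((y + t *\<^sub>R e - mu) \<bullet> (A *v (y + t *\<^sub>R e - mu)))
     = -(1/2) * ((y - mu) \<bullet> (A *v (y - mu))) + t * (e \<bullet> (A *v (mu - y))) - t^2/2 * (e \<bullet> (A *v e))"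
    unfolding s by (simp add: algebra_simps)
  have "A *v (mu - (y + t *\<^sub>R e)) = A *v mu - A *v y - t *\<^sub>R (A *v e)"
    by (simp add: matrix_vector_mult_diff_distrib matrix_vector_right_distrib matrix_vector_mult_scaleR)
  moreover have "A *v (mu - y) = A *v mu - A *v y" by (simp add: matrix_vector_mult_diff_distrib)
  ultimately show "e \<bullet> (A *v (mu - (y + t *\<^sub>R e))) = e \<bullet> (A *v (mu - y)) - t * (e \<bullet> (A *v e))"
    by (simp add: inner_diff_right)
qed

lemma avg_bound:
  fixes c e f :: "nat \<Rightarrow> real"
  assumes "finite I" "\<And>k. k \<in> I \<Longrightarrow> c k * e k \<ge> 0" "\<And>k. k \<in> I \<Longrightarrow> \<bar>f k\<bar> \<le> B"
    and "(\<Sum>k\<in>I. c k * e k) > 0"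
  shows "\<bar>(\<Sum>k\<in>I. c k * (e k * f k)) / (\<Sum>k\<in>I. c k * e k)\<bar> \<le> B"
proof -
  have "\<bar>\<Sum>k\<in>I. c k * (e k * f k)\<bar> \<le> (\<Sum>k\<in>I. \<bar>c k * (e k * f k)\<bar>)" by (rule sum_abs)
  also have "\<dots> \<le> (\<Sum>k\<in>I. (c k * e k) * B)"
  proof (rule sum_mono)
    fix k assume k: "k \<in> I"
    have "\<bar>c k * (e k * f k)\<bar> = (c k * e k) * \<bar>f k\<bar>"
    proof -
      have "c k * (e k * f k) = (c k * e k) * f k" by (simp only: mult.assoc)
      then have "\<bar>c k * (e k * f k)\<bar> = \<bar>c k * e k\<bar> * \<bar>f k\<bar>" by (simp only: abs_mult)
      then show ?thesis using assms(2)[OF k] by (simp only: abs_of_nonneg)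
    qed
    also have "\<dots> \<le> (c k * e k) * B" using assms(2,3)[OF k] by (rule mult_left_mono[rotated])
    finally show "\<bar>c k * (e k * f k)\<bar> \<le> (c k * e k) * B" .
  qed
  also have "\<dots> = (\<Sum>k\<in>I. c k * e k) * B" by (rule sum_distrib_right[symmetric])
  finally have "\<bar>\<Sum>k\<in>I. c k * (e k * f k)\<bar> \<le> (\<Sum>k\<in>I. c k * e k) * B" .
  then have "\<bar>\<Sum>k\<in>I. c k * (e k * f k)\<bar> \<le> B * (\<Sum>k\<in>I. c k * e k)" by (simp only: mult.commute)
  moreover have "\<bar>(\<Sum>k\<in>I. c k * (e k * f k)) / (\<Sum>k\<in>I. c k * e k)\<bar>
      = \<bar>\<Sum>k\<in>I. c k * (e k * f k)\<bar> / (\<Sum>k\<in>I. c k * e k)"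
    using assms(4) by (simp add: abs_divide)
  ultimately show ?thesis using assms(4) by (simp only: pos_divide_le_eq)
qed


lemma fixed_theta:
  fixes K :: nat and w :: "nat \<Rightarrow> real" and mu :: "nat \<Rightarrow> real^'n" and Sg :: "nat \<Rightarrow> real^'n^'n"
  assumes w_nonneg: "\<And>k. k \<in> {1..K} \<Longrightarrow> w k \<ge> 0"
    and w_sum: "(\<Sum>k=1..K. w k) = 1"
    and symm: "\<And>k. k \<in> {1..K} \<Longrightarrow> transpose (Sg k) = Sg k"
    and eig: "\<And>k l. k \<in> {1..K} \<Longrightarrow> is_eigenvalue (Sg k) l \<Longrightarrow> lmin \<le> l"
    and lpos: "lmin > 0"
    and mub: "\<And>k. k \<in> {1..K} \<Longrightarrow> norm (mu k) \<le> Mb"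
  shows "norm (grad (\<lambda>y. ln (\<Sum>k=1..K. w k * gaussian_pdf (mu k) (Sg k) y)) x) \<le> (Mb + norm x) / lmin"
    and "\<bar>laplacian (\<lambda>y. ln (\<Sum>k=1..K. w k * gaussian_pdf (mu k) (Sg k) y)) x\<bar>
           \<le> real CARD('n) * (2 * ((Mb + norm x) / lmin)^2 + 1 / lmin)"
proof -
  define I where "I = {1..K}"
  have finI: "finite I" by (simp add: I_def)
  define A where "A k = matrix_inv (Sg k)" for k
  define c where "c k = w k / sqrt ((2*pi)^CARD('n) * det (Sg k))" for k
  define ph where "ph k y = -(1/2) * ((y - mu k) \<bullet> (A k *v (y - mu k)))" for k y
  define be where "be k y i = axis i 1 \<bullet> (A k *v (mu k - y))" for k y i
  define h where "h k i = axis i 1 \<bullet> (A k *v axis i (1::real))" for k i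
  define P where "P y = (\<Sum>k\<in>I. c k * exp (ph k y))" for y
  note pf = pd_facts[OF symm lpos eig]
  have symA: "transpose (A k) = A k" if "k \<in> I" for k
    using pf(3) that by (simp add: A_def I_def)
  have detpos: "det (Sg k) > 0" if "k \<in> I" for k
    using pf(2) that by (simp add: I_def)
  have normA: "norm (A k *v u) \<le> norm u / lmin" if "k \<in> I" for k u
    using pf(6) that by (simp add: A_def I_def)
  have c_nonneg: "c k \<ge> 0" if "k \<in> I" for k
    using w_nonneg[of k] detpos[OF that] that by (simp add: c_def I_def)
  have fP: "(\<lambda>y. ln (\<Sum>k=1..K. w k * gaussian_pdf (mu k) (Sg k) y)) = (\<lambda>y. ln (P y))"
  proof (intro ext arg_cong[where f=ln])
    fix y
    show "(\<Sum>k=1..K. w k * gaussian_pdf (mu k) (Sg k) y) = P y"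
      unfolding P_def I_def
      by (intro sum.cong refl) (simp add: gaussian_pdf_def c_def ph_def A_def)
  qed
  obtain k0 where k0: "k0 \<in> I" "w k0 > 0"
  proof -
    have "\<exists>k\<in>I. w k \<noteq> 0"
    proof (rule ccontr)
      assume "\<not> (\<exists>k\<in>I. w k \<noteq> 0)"
      then have "(\<Sum>k=1..K. w k) = 0" by (simp add: I_def)
      then show False using w_sum by simp
    qed
    then obtain k where "k \<in> I" "w k \<noteq> 0" by blast
    moreover have "w k \<ge> 0" using w_nonneg \<open>k \<in> I\<close> by (simp add: I_def)
    ultimately show ?thesis using that by force
  qed
  have ck0: "c k0 > 0" using k0 detpos[OF k0(1)] by (simp add: c_def)
  have Ppos: "P y > 0" for y
    unfolding P_def
    by (rule sum_pos2[OF finI k0(1)]) (use ck0 c_nonneg in auto)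
  have ex1: "ph k (y + t *\<^sub>R axis i 1) = ph k y + t * be k y i - t^2/2 * h k i" if "k \<in> I" for k y t i
    unfolding ph_def be_def h_def using expand(1)[OF symA[OF that]] by simp
  have ex2: "be k (y + t *\<^sub>R axis i 1) i = be k y i - t * h k i" if "k \<in> I" for k y t i
    unfolding be_def h_def using expand(2)[OF symA[OF that]] by simp
  define N where "N i y = (\<Sum>k\<in>I. c k * (exp (ph k y) * be k y i))" for i y
  define N2 where "N2 i y = (\<Sum>k\<in>I. c k * (exp (ph k y) * ((be k y i)^2 - h k i)))" for i y
  have pd1: "partial_deriv (\<lambda>y. ln (P y)) i y = N i y / P y" for i y
  proof -
    have "(\<lambda>t. ln (P (y + t *\<^sub>R axis i 1))) =
          (\<lambda>t. ln (\<Sum>k\<in>I. c k * exp (ph k y + t * be k y i - t^2/2 * h k i)))"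
      unfolding P_def by (intro ext arg_cong[where f=ln] sum.cong refl) (simp add: ex1)
    moreover have "deriv (\<lambda>t. ln (\<Sum>k\<in>I. c k * exp (ph k y + t * be k y i - t^2/2 * h k i))) 0
        = N i y / P y"
      using D1[where I=I and c=c and a="\<lambda>k. ph k y" and b="\<lambda>k. be k y i" and h="\<lambda>k. h k i"] Ppos[of y]
      unfolding N_def P_def by simp
    ultimately show ?thesis unfolding partial_deriv_def by simp
  qed
  have pd2: "partial_deriv (\<lambda>y. partial_deriv (\<lambda>y. ln (P y)) i y) i x
      = N2 i x / P x - (N i x / P x)^2" for i
  proof -
    have "(\<lambda>t. partial_deriv (\<lambda>y. ln (P y)) i (x + t *\<^sub>R axis i 1)) =
          (\<lambda>t. (\<Sum>k\<in>I. c k * (exp (ph k x + t * be k x i - t^2/2 * h k i) * (be k x i - t * h k i)))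
             / (\<Sum>k\<in>I. c k * exp (ph k x + t * be k x i - t^2/2 * h k i)))"
    proof
      fix t
      have "N i (x + t *\<^sub>R axis i 1) = (\<Sum>k\<in>I. c k * (exp (ph k x + t * be k x i - t^2/2 * h k i) * (be k x i - t * h k i)))"
        unfolding N_def by (intro sum.cong refl) (simp add: ex1 ex2)
      moreover have "P (x + t *\<^sub>R axis i 1) = (\<Sum>k\<in>I. c k * exp (ph k x + t * be k x i - t^2/2 * h k i))"
        unfolding P_def by (intro sum.cong refl) (simp add: ex1)
      ultimately show "partial_deriv (\<lambda>y. ln (P y)) i (x + t *\<^sub>R axis i 1) =
          (\<Sum>k\<in>I. c k * (exp (ph k x + t * be k x i - t^2/2 * h k i) * (be k x i - t * h k i)))
             / (\<Sum>k\<in>I. c k * exp (ph k x + t * be k x i - t^2/2 * h k i))"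
        by (simp only: pd1)
    qed
    moreover have "deriv (\<lambda>t. (\<Sum>k\<in>I. c k * (exp (ph k x + t * be k x i - t^2/2 * h k i) * (be k x i - t * h k i)))
             / (\<Sum>k\<in>I. c k * exp (ph k x + t * be k x i - t^2/2 * h k i))) 0
        = N2 i x / P x - (N i x / P x)^2"
      using D2[where I=I and c=c and a="\<lambda>k. ph k x" and b="\<lambda>k. be k x i" and h="\<lambda>k. h k i"] Ppos[of x]
      unfolding N_def N2_def P_def by simp
    ultimately show ?thesis unfolding partial_deriv_def by simp
  qed
  define G where "G = (Mb + norm x) / lmin"
  have gb: "norm (A k *v (mu k - x)) \<le> G" if "k \<in> I" for k
  proof -
    have "norm (A k *v (mu k - x)) \<le> norm (mu k - x) / lmin" by (rule normA[OF that])
    also have "\<dots> \<le> (Mb + norm x) / lmin"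
    proof (rule divide_right_mono)
      have "norm (mu k - x) \<le> norm (mu k) + norm x" by (rule norm_triangle_ineq4)
      then show "norm (mu k - x) \<le> Mb + norm x" using mub[of k] that by (simp add: I_def)
    qed (use lpos in simp)
    finally show ?thesis by (simp add: G_def)
  qed
  have beb: "\<bar>be k x i\<bar> \<le> G" if "k \<in> I" for k i
  proof -
    have "\<bar>be k x i\<bar> = \<bar>(A k *v (mu k - x)) $ i\<bar>" by (simp add: be_def inner_axis')
    also have "\<dots> \<le> norm (A k *v (mu k - x))" by (rule component_le_norm_cart)
    finally show ?thesis using gb[OF that] by linarith
  qed
  have hb: "\<bar>h k i\<bar> \<le> 1 / lmin" if "k \<in> I" for k i
  proof -
    have "\<bar>h k i\<bar> = \<bar>(A k *v axis i 1) $ i\<bar>" by (simp add: h_def inner_axis')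
    also have "\<dots> \<le> norm (A k *v axis i (1::real))" by (rule component_le_norm_cart)
    also have "\<dots> \<le> norm (axis i (1::real)) / lmin" by (rule normA[OF that])
    finally show ?thesis by simp
  qed
  have G0: "G \<ge> 0" using beb[OF k0(1), of "undefined::'n"] abs_ge_zero[of "be k0 x (undefined::'n)"] by linarith
  have wnn: "c k * exp (ph k x) \<ge> 0" if "k \<in> I" for k
    using c_nonneg[OF that] by simp
  have Nb: "\<bar>N i x / P x\<bar> \<le> G" for i
    unfolding N_def P_def
    by (rule avg_bound[OF finI wnn beb]) (use Ppos[of x] in \<open>simp_all add: P_def\<close>)
  have N2b: "\<bar>N2 i x / P x\<bar> \<le> G^2 + 1/lmin" for i
    unfolding N2_def P_def
  proof (rule avg_bound[OF finI wnn])
    fix k assume k: "k \<in> I"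
    have "(be k x i)^2 \<le> G^2"
      using beb[OF k, of i] by (metis abs_le_square_iff abs_of_nonneg G0 power2_abs)
    then show "\<bar>(be k x i)^2 - h k i\<bar> \<le> G^2 + 1/lmin"
      using hb[OF k, of i] zero_le_power2[of "be k x i"] by (simp only: abs_le_iff) linarith
  next
    show "0 < (\<Sum>k\<in>I. c k * exp (ph k x))" using Ppos[of x] by (simp only: P_def)
  qed
  show "norm (grad (\<lambda>y. ln (\<Sum>k=1..K. w k * gaussian_pdf (mu k) (Sg k) y)) x) \<le> (Mb + norm x) / lmin"
  proof -
    define V where "V = (\<Sum>k\<in>I. (c k * exp (ph k x)) *\<^sub>R (A k *v (mu k - x)))"
    have NV: "N i x = V $ i" for i
    proof -
      have "V $ i = (\<Sum>k\<in>I. (c k * exp (ph k x)) * (A k *v (mu k - x)) $ i)"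
        by (simp add: V_def sum_component)
      also have "\<dots> = N i x"
        unfolding N_def by (intro sum.cong refl) (simp add: be_def inner_axis')
      finally show ?thesis by simp
    qed
    have gradeq: "grad (\<lambda>y. ln (\<Sum>k=1..K. w k * gaussian_pdf (mu k) (Sg k) y)) x = (1 / P x) *\<^sub>R V"
      unfolding fP grad_def by (simp add: vec_eq_iff pd1 NV)
    have "norm V \<le> (\<Sum>k\<in>I. norm ((c k * exp (ph k x)) *\<^sub>R (A k *v (mu k - x))))"
      unfolding V_def by (rule norm_sum)
    also have "\<dots> \<le> (\<Sum>k\<in>I. (c k * exp (ph k x)) * G)"
    proof (rule sum_mono)
      fix k assume k: "k \<in> I"
      have "norm ((c k * exp (ph k x)) *\<^sub>R (A k *v (mu k - x))) = (c k * exp (ph k x)) * norm (A k *v (mu k - x))"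
        using wnn[OF k] by simp
      also have "\<dots> \<le> (c k * exp (ph k x)) * G" by (rule mult_left_mono[OF gb[OF k] wnn[OF k]])
      finally show "norm ((c k * exp (ph k x)) *\<^sub>R (A k *v (mu k - x))) \<le> (c k * exp (ph k x)) * G" .
    qed
    also have "\<dots> = P x * G" unfolding P_def by (rule sum_distrib_right[symmetric])
    finally have "norm V \<le> P x * G" .
    then have "norm V / P x \<le> G" using Ppos[of x] by (simp only: pos_divide_le_eq mult.commute)
    moreover have "norm ((1 / P x) *\<^sub>R V) = norm V / P x" using Ppos[of x] by simp
    ultimately have "norm ((1 / P x) *\<^sub>R V) \<le> G" by (simp only:)
    then show ?thesis unfolding gradeq G_def .
  qed
  show "\<bar>laplacian (\<lambda>y. ln (\<Sum>k=1..K. w k * gaussian_pdf (mu k) (Sg k) y)) x\<bar>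
           \<le> real CARD('n) * (2 * ((Mb + norm x) / lmin)^2 + 1 / lmin)"
  proof -
    have "laplacian (\<lambda>y. ln (\<Sum>k=1..K. w k * gaussian_pdf (mu k) (Sg k) y)) x
        = (\<Sum>i\<in>UNIV. N2 i x / P x - (N i x / P x)^2)"
      unfolding fP laplacian_def by (simp only: pd2)
    also have "\<bar>\<dots>\<bar> \<le> (\<Sum>i\<in>(UNIV::'n set). \<bar>N2 i x / P x - (N i x / P x)^2\<bar>)" by (rule sum_abs)
    also have "\<dots> \<le> (\<Sum>i\<in>(UNIV::'n set). 2 * G^2 + 1/lmin)"
    proof (rule sum_mono)
      fix i :: 'n
      have "(N i x / P x)^2 \<le> G^2"
        using Nb[of i] G0 by (metis abs_le_square_iff abs_of_nonneg power2_abs)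
      then show "\<bar>N2 i x / P x - (N i x / P x)^2\<bar> \<le> 2 * G^2 + 1/lmin"
        using N2b[of i] by (smt (verit) zero_le_power2)
    qed
    also have "\<dots> = real CARD('n) * (2 * G^2 + 1/lmin)" by simp
    finally show ?thesis by (simp add: G_def)
  qed
qed



lemma le_one_plus_powr:
  fixes a p :: real
  assumes "a \<ge> 0" "p \<ge> 1"
  shows "a \<le> 1 + a powr p"
proof (cases "a \<le> 1")
  case True then show ?thesis using powr_ge_zero[of a p] by linarith
next
  case False
  then have "a powr 1 \<le> a powr p" using assms by (intro powr_mono) auto
  then show ?thesis using assms(1) by (simp add: powr_one)
qed

lemma arith_final:
  fixes lmin Cm r z t a :: real and n :: nat
  assumes lpos: "lmin > 0" and Cm: "Cm \<ge> 0" and z: "0 < z" "z \<le> 2" and t: "t \<ge> 0" and a: "a \<ge> 0"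
  defines "R \<equiv> 1 + t powr r" and "X1 \<equiv> 1 + a powr (2/z)" and "X2 \<equiv> 1 + a powr (4/z)"
    and "R2 \<equiv> 1 + t powr (2*r)"
  shows "(Cm * R + a) / lmin \<le> ((1+Cm)/lmin) * R * X1"
    and "real n * (2 * ((Cm * R + a) / lmin)^2 + 1/lmin) \<le> (real n * (16*((1+Cm)/lmin)^2 + 1/lmin)) * R2 * X2"
proof -
  define s where "s = t powr r"
  have s0: "s \<ge> 0" by (simp add: s_def)
  have R1: "R \<ge> 1" using s0 by (simp add: R_def s_def)
  have X11: "X1 \<ge> 1" by (simp add: X1_def)
  have X21: "X2 \<ge> 1" by (simp add: X2_def)
  have R21: "R2 \<ge> 1" by (simp add: R2_def)
  have p1: "2/z \<ge> 1" using z by (simp add: field_simps)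
  have aX1: "a \<le> X1" unfolding X1_def by (rule le_one_plus_powr[OF a p1])
  have main: "Cm * R + a \<le> (1+Cm) * R * X1"
  proof -
    have "Cm * R \<le> Cm * R * X1" using mult_left_mono[OF X11, of "Cm*R"] Cm R1 by simp
    moreover have "a \<le> R * X1"
    proof -
      have "1 * X1 \<le> R * X1" using mult_right_mono[OF R1, of X1] X11 by simp
      then show ?thesis using aX1 by simp
    qed
    ultimately show ?thesis by (simp add: algebra_simps)
  qed
  show "(Cm * R + a) / lmin \<le> ((1+Cm)/lmin) * R * X1"
    using main lpos by (simp add: divide_right_mono)
  have main2: "Cm * R + a \<le> (1+Cm) * R * (1 + a)"
  proof -
    have "Cm * R \<le> Cm * R * (1+a)" using mult_left_mono[of 1 "1+a" "Cm*R"] Cm R1 a by simp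
    moreover have "a \<le> R * (1+a)"
    proof -
      have "1 * (1+a) \<le> R * (1+a)" using mult_right_mono[OF R1, of "1+a"] a by simp
      then show ?thesis by simp
    qed
    ultimately show ?thesis by (simp add: algebra_simps)
  qed
  define K1 where "K1 = (1+Cm)/lmin"
  define G where "G = (Cm * R + a) / lmin"
  have G0: "G \<ge> 0" using Cm R1 a lpos by (simp add: G_def)
  have GK: "G \<le> K1 * (R * (1 + a))" using main2 lpos
    by (simp add: G_def K1_def divide_right_mono mult.assoc)
  have G2: "G^2 \<le> K1^2 * (R^2 * (1+a)^2)"
  proof -
    have "G^2 \<le> (K1 * (R * (1 + a)))^2" by (rule power_mono[OF GK G0])
    then show ?thesis by (simp add: power_mult_distrib)
  qed
  have sq: "s * s = t powr (2*r)"
  proof -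
    have "t powr (2*r) = t powr (r + r)" by (simp only: mult_2)
    also have "\<dots> = s * s" by (simp only: powr_add s_def)
    finally show ?thesis by simp
  qed
  have Rsq: "R^2 \<le> 2 * R2"
  proof -
    have "R^2 = 1 + 2* s + s * s" by (simp add: R_def s_def power2_eq_square algebra_simps)
    moreover have "2* s \<le> 1 + s * s"
      using zero_le_power2[of "s - 1"] by (simp add: power2_eq_square algebra_simps)
    ultimately show ?thesis using sq by (simp add: R2_def)
  qed
  have asq: "(1+a)^2 \<le> 4 * X2"
  proof -
    have "a^2 \<le> 1 + (a^2) powr (2/z)" by (rule le_one_plus_powr[OF _ p1]) simp
    also have "(a^2) powr (2/z) = a powr (4/z)"
    proof -
      have "a^2 = a powr 2" using powr_numeral[OF a, of "num.Bit0 num.One"] by simp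
      then have "(a^2) powr (2/z) = a powr (2 * (2/z))" by (simp only: powr_powr)
      also have "2 * (2/z) = 4/z" by simp
      finally show ?thesis .
    qed
    finally have "a^2 \<le> 1 + a powr (4/z)" .
    moreover have "(1+a)^2 \<le> 2 + 2*a^2"
      using zero_le_power2[of "a - 1"] by (simp add: power2_eq_square algebra_simps)
    ultimately show ?thesis using powr_ge_zero[of a "4/z"] unfolding X2_def distrib_left mult_1_right by linarith
  qed
  have "R^2 * (1+a)^2 \<le> (2*R2) * (4*X2)"
    by (rule mult_mono[OF Rsq asq]) (use R21 in auto)
  then have "G^2 \<le> K1^2 * (8 * (R2 * X2))"
  proof -
    have "K1^2 * (R^2 * (1+a)^2) \<le> K1^2 * ((2*R2) * (4*X2))"
      by (rule mult_left_mono[OF \<open>R^2 * (1+a)^2 \<le> (2*R2) * (4*X2)\<close>]) simp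
    then show ?thesis using G2 by simp
  qed
  then have "2 * G^2 + 1/lmin \<le> 16 * K1^2 * (R2 * X2) + (1/lmin) * (R2 * X2)"
  proof -
    have "1/lmin \<le> (1/lmin) * (R2 * X2)"
    proof -
      have "1 \<le> R2 * X2" using mult_mono[OF R21 X21] R21 by simp
      then show ?thesis using lpos by (simp add: divide_right_mono)
    qed
    then show ?thesis using \<open>G^2 \<le> K1^2 * (8 * (R2 * X2))\<close> by linarith
  qed
  then have "2 * G^2 + 1/lmin \<le> (16 * K1^2 + 1/lmin) * R2 * X2" by (simp add: algebra_simps)
  then have "real n * (2 * G^2 + 1/lmin) \<le> real n * ((16 * K1^2 + 1/lmin) * R2 * X2)"
    by (rule mult_left_mono) simp
  then show "real n * (2 * ((Cm * R + a) / lmin)^2 + 1/lmin) \<le> (real n * (16*((1+Cm)/lmin)^2 + 1/lmin)) * R2 * X2"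
    by (simp add: G_def K1_def mult.assoc)
qed



theorem proposition4p4:
  fixes K :: nat
    and w :: "nat \<Rightarrow> real^'t \<Rightarrow> real"
    and m :: "nat \<Rightarrow> real^'t \<Rightarrow> real^'x"
    and S :: "nat \<Rightarrow> real^'t \<Rightarrow> real^'x^'x"
    and \<Theta> :: "(real^'t) set"
    and \<zeta> :: real
  assumes w_nonneg: "\<And>k \<theta>. k \<in> {1..K} \<Longrightarrow> \<theta> \<in> \<Theta> \<Longrightarrow> w k \<theta> \<ge> 0"
    and w_sum: "\<And>\<theta>. \<theta> \<in> \<Theta> \<Longrightarrow> (\<Sum>k=1..K. w k \<theta>) = 1"
    and cont_w: "\<And>k. k \<in> {1..K} \<Longrightarrow> continuous_on \<Theta> (w k)"
    and cont_m: "\<And>k. k \<in> {1..K} \<Longrightarrow> continuous_on \<Theta> (m k)"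
    and cont_S: "\<And>k. k \<in> {1..K} \<Longrightarrow> continuous_on \<Theta> (S k)"
    and mean_growth: "\<exists>r C. r > 0 \<and> C \<ge> 0 \<and>
          (\<forall>\<theta>\<in>\<Theta>. \<forall>k\<in>{1..K}. norm (m k \<theta>) \<le> C * (1 + norm \<theta> powr r))"
    and cov_spec: "\<exists>lmin lmax. 0 < lmin \<and> lmin \<le> lmax \<and>
          (\<forall>\<theta>\<in>\<Theta>. \<forall>k\<in>{1..K}. transpose (S k \<theta>) = S k \<theta> \<and>
             (\<forall>l. is_eigenvalue (S k \<theta>) l \<longrightarrow> lmin \<le> l \<and> l \<le> lmax))"
    and zeta: "0 < \<zeta>" "\<zeta> \<le> 2"
  shows "\<exists>K1 K2 k1 k2. 0 < K1 \<and> 0 < K2 \<and> k1 \<ge> 0 \<and> k2 \<ge> 0 \<and>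
          (\<forall>x. \<forall>\<theta>\<in>\<Theta>.
             norm (grad (\<lambda>y. ln (gmm_density K w m S \<theta> y)) x)
               \<le> K1 * (1 + norm \<theta> powr k1) * (1 + norm x powr (2 / \<zeta>)) \<and>
             \<bar>laplacian (\<lambda>y. ln (gmm_density K w m S \<theta> y)) x\<bar>
               \<le> K2 * (1 + norm \<theta> powr k2) * (1 + norm x powr (4 / \<zeta>)))"
proof -
  obtain r Cm where r: "r > 0" and Cm: "Cm \<ge> 0"
    and mg: "\<And>\<theta> k. \<theta> \<in> \<Theta> \<Longrightarrow> k \<in> {1..K} \<Longrightarrow> norm (m k \<theta>) \<le> Cm * (1 + norm \<theta> powr r)"
    using mean_growth by blast
  obtain lmin lmax where lpos: "0 < lmin"
    and cs: "\<And>\<theta> k. \<theta> \<in> \<Theta> \<Longrightarrow> k \<in> {1..K} \<Longrightarrow> transpose (S k \<theta>) = S k \<theta> \<and>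
             (\<forall>l. is_eigenvalue (S k \<theta>) l \<longrightarrow> lmin \<le> l \<and> l \<le> lmax)"
    using cov_spec by blast
  define K1 where "K1 = (1 + Cm) / lmin"
  define K2 where "K2 = real CARD('x) * (16 * ((1 + Cm) / lmin)^2 + 1 / lmin)"
  have K1pos: "0 < K1" using Cm lpos by (simp add: K1_def)
  have K2pos: "0 < K2"
  proof -
    have "0 < 16 * ((1 + Cm) / lmin)^2 + 1 / lmin" using lpos
      by (simp add: add_nonneg_pos)
    then show ?thesis by (simp add: K2_def)
  qed
  have bounds: "norm (grad (\<lambda>y. ln (gmm_density K w m S \<theta> y)) x)
               \<le> K1 * (1 + norm \<theta> powr r) * (1 + norm x powr (2 / \<zeta>)) \<and>
             \<bar>laplacian (\<lambda>y. ln (gmm_density K w m S \<theta> y)) x\<bar>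
               \<le> K2 * (1 + norm \<theta> powr (2*r)) * (1 + norm x powr (4 / \<zeta>))"
    if th: "\<theta> \<in> \<Theta>" for x \<theta>
  proof -
    have gm: "(\<lambda>y. ln (gmm_density K w m S \<theta> y))
        = (\<lambda>y. ln (\<Sum>k=1..K. w k \<theta> * gaussian_pdf (m k \<theta>) (S k \<theta>) y))"
      by (simp add: gmm_density_def)
    note ft = fixed_theta[where K=K and w="\<lambda>k. w k \<theta>" and mu="\<lambda>k. m k \<theta>" and Sg="\<lambda>k. S k \<theta>"
        and lmin=lmin and Mb="Cm * (1 + norm \<theta> powr r)" and x=x]
    have hyps: "\<And>k. k \<in> {1..K} \<Longrightarrow> w k \<theta> \<ge> 0" "(\<Sum>k=1..K. w k \<theta>) = 1"
      "\<And>k. k \<in> {1..K} \<Longrightarrow> transpose (S k \<theta>) = S k \<theta>"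
      "\<And>k l. k \<in> {1..K} \<Longrightarrow> is_eigenvalue (S k \<theta>) l \<Longrightarrow> lmin \<le> l"
      "\<And>k. k \<in> {1..K} \<Longrightarrow> norm (m k \<theta>) \<le> Cm * (1 + norm \<theta> powr r)"
      using w_nonneg[OF _ th] w_sum[OF th] cs[OF th] mg[OF th] by auto
    have g1: "norm (grad (\<lambda>y. ln (gmm_density K w m S \<theta> y)) x) \<le> (Cm * (1 + norm \<theta> powr r) + norm x) / lmin"
      unfolding gm by (rule ft(1)[OF hyps(1,2,3,4) lpos hyps(5)])
    have g2: "\<bar>laplacian (\<lambda>y. ln (gmm_density K w m S \<theta> y)) x\<bar>
        \<le> real CARD('x) * (2 * ((Cm * (1 + norm \<theta> powr r) + norm x) / lmin)^2 + 1 / lmin)"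
      unfolding gm by (rule ft(2)[OF hyps(1,2,3,4) lpos hyps(5)])
    note af1 = arith_final(1)[where r=r and t="norm \<theta>" and a="norm x" and lmin=lmin and Cm=Cm and z=\<zeta>, OF lpos Cm zeta norm_ge_zero norm_ge_zero]
    note af2 = arith_final(2)[where r=r and t="norm \<theta>" and a="norm x" and n="CARD('x)" and lmin=lmin and Cm=Cm and z=\<zeta>, OF lpos Cm zeta norm_ge_zero norm_ge_zero]
    show ?thesis
    proof
      show "norm (grad (\<lambda>y. ln (gmm_density K w m S \<theta> y)) x)
               \<le> K1 * (1 + norm \<theta> powr r) * (1 + norm x powr (2 / \<zeta>))"
        using g1 af1 unfolding K1_def by linarith
      show "\<bar>laplacian (\<lambda>y. ln (gmm_density K w m S \<theta> y)) x\<bar>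
               \<le> K2 * (1 + norm \<theta> powr (2*r)) * (1 + norm x powr (4 / \<zeta>))"
        using g2 af2 unfolding K2_def by linarith
    qed
  qed
  show ?thesis
    apply (rule exI[of _ K1], rule exI[of _ K2], rule exI[of _ r], rule exI[of _ "2*r"])
    using K1pos K2pos r bounds by simp
qed

end
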